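(* Let $G$ be a graph with $n$ vertices that is $p$-almost equitably $k$-colorable, where $k \le n$. Then there exists a set $X$ of exactly $\min\{p, n-k\}$ vertices such that $G \setminus X$ has an equitable $k$-coloring.
   Context: A $k$-coloring of a graph is equitable if it partitions the vertex set into $k$ stable sets (color classes) whose sizes pairwise differ by at most one. A graph $G$ is $p$-almost equitably $k$-colorable if there exists a set $X$ of at most $p$ vertices such that $G\setminus X$ has an equitable $k$-coloring. *)

theory Defs
  imports Main
begin

text \<open>G minus X is the induced subgraph on V - X,
represented by restricting attention to the vertex set V - X.\<close>

definition simple_graph :: "'a set \<Rightarrow> ('a \<Rightarrow> 'a \<Rightarrow> bool) \<Rightarrow> bool" where
  "simple_graph V E \<longleftrightarrow> finite V \<and> (\<forall>u v. E u v \<longrightarrow> E v u) \<and> (\<forall>v. \<not> E v v)"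

definition equitable_coloring ::
  "('a \<Rightarrow> 'a \<Rightarrow> bool) \<Rightarrow> 'a set \<Rightarrow> nat \<Rightarrow> ('a \<Rightarrow> nat) \<Rightarrow> bool" where
  "equitable_coloring E S k c \<longleftrightarrow>
     (\<forall>v\<in>S. c v < k) \<and>
     (\<forall>u\<in>S. \<forall>v\<in>S. E u v \<longrightarrow> c u \<noteq> c v) \<and>
     (\<forall>i<k. \<forall>j<k. card {v\<in>S. c v = i} \<le> card {v\<in>S. c v = j} + 1)"

definition equitably_colorable :: "('a \<Rightarrow> 'a \<Rightarrow> bool) \<Rightarrow> 'a set \<Rightarrow> nat \<Rightarrow> bool" where
  "equitably_colorable E S k \<longleftrightarrow> (\<exists>c. equitable_coloring E S k c)"

definition almost_equitably_colorable ::
  "'a set \<Rightarrow> ('a \<Rightarrow> 'a \<Rightarrow> bool) \<Rightarrow> nat \<Rightarrow> nat \<Rightarrow> bool" where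
  "almost_equitably_colorable V E p k \<longleftrightarrow>
     (\<exists>X. X \<subseteq> V \<and> card X \<le> p \<and> equitably_colorable E (V - X) k)"

end

theory Submission
  imports Defs
begin

lemma remove_one:
  assumes fin: "finite S" and ne: "S \<noteq> {}" and ec: "equitable_coloring E S k c"
  shows "\<exists>v\<in>S. equitable_coloring E (S - {v}) k c"
proof -
  define f where "f j = card {v\<in>S. c v = j}" for j
  obtain w where w: "w \<in> S" using ne by blast
  have cw: "c w < k" using ec w unfolding equitable_coloring_def by blast
  hence kne: "f ` {..<k} \<noteq> {}" by auto
  have "Max (f ` {..<k}) \<in> f ` {..<k}" using kne by (intro Max_in) auto
  then obtain i where i: "i < k" "f i = Max (f ` {..<k})" by auto
  have imax: "f j \<le> f i" if "j < k" for j using i that by auto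
  have "f (c w) > 0" unfolding f_def using fin w
    by (subst card_gt_0_iff) auto
  hence "f i > 0" using imax[OF cw] by linarith
  then obtain v where v: "v \<in> S" "c v = i" unfolding f_def
    by (metis (mono_tags, lifting) card.empty empty_Collect_eq less_irrefl)
  define g where "g j = card {x\<in>S - {v}. c x = j}" for j
  have gi: "g i = f i - 1"
  proof -
    have "{x\<in>S - {v}. c x = i} = {x\<in>S. c x = i} - {v}" by auto
    thus ?thesis unfolding g_def f_def using v fin by simp
  qed
  have gj: "g j = f j" if "j \<noteq> i" for j
  proof -
    have "{x\<in>S - {v}. c x = j} = {x\<in>S. c x = j}" using v that by auto
    thus ?thesis unfolding g_def f_def by simp
  qed
  have bal: "f a \<le> f b + 1" if "a < k" "b < k" for a b
    using ec that unfolding equitable_coloring_def f_def by blast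
  have "g a \<le> g b + 1" if "a < k" "b < k" for a b
    using bal[OF that] bal[OF that(1) i(1)] bal[OF i(1) that(2)] imax[OF that(1)] imax[OF that(2)]
      gi gj[of a] gj[of b] \<open>f i > 0\<close>
    by (cases "a = i"; cases "b = i") auto
  hence "equitable_coloring E (S - {v}) k c"
    using ec unfolding equitable_coloring_def g_def by blast
  thus ?thesis using v by blast
qed

lemma remove_many:
  assumes fin: "finite S" and ec: "equitable_coloring E S k c"
  shows "r \<le> card S \<Longrightarrow> \<exists>S'. S' \<subseteq> S \<and> card S' = card S - r \<and> equitable_coloring E S' k c"
proof (induction r)
  case 0
  then show ?case using ec by auto
next
  case (Suc r)
  then obtain S' where S': "S' \<subseteq> S" "card S' = card S - r" "equitable_coloring E S' k c" by auto
  have f': "finite S'" using S' fin finite_subset by blast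
  have "S' \<noteq> {}" using S' Suc.prems by auto
  then obtain v where v: "v \<in> S'" "equitable_coloring E (S' - {v}) k c"
    using remove_one[OF f' _ S'(3)] by blast
  have "card (S' - {v}) = card S - Suc r" using v f' S' by simp
  thus ?case using v S' by blast
qed

theorem claim1:
  fixes V :: "'a set" and E :: "'a \<Rightarrow> 'a \<Rightarrow> bool" and p k :: nat
  assumes "simple_graph V E"
    and "k \<le> card V"
    and "almost_equitably_colorable V E p k"
  shows "\<exists>X. X \<subseteq> V \<and> card X = min p (card V - k) \<and> equitably_colorable E (V - X) k"
proof -
  have finV: "finite V" and irr: "\<And>v. \<not> E v v" using assms(1) unfolding simple_graph_def by auto
  show ?thesis
  proof (cases "card V - k \<le> p")
    case True
    obtain X where X: "X \<subseteq> V" "card X = card V - k"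
      using obtain_subset_with_card_n[of "card V - k" V] by auto
    have cS: "card (V - X) = card {..<k}" using X finV assms(2)
      by (simp add: card_Diff_subset finite_subset)
    obtain f where f: "bij_betw f (V - X) {..<k}"
      using cS finV by (metis bij_betw_iff_card finite_Diff finite_lessThan)
    have "equitable_coloring E (V - X) k f"
      unfolding equitable_coloring_def
    proof (intro conjI ballI allI impI)
      show "f v < k" if "v \<in> V - X" for v using f that bij_betwE by fastforce
      show "f u \<noteq> f v" if "u \<in> V - X" "v \<in> V - X" "E u v" for u v
        using f that irr unfolding bij_betw_def inj_on_def by metis
      fix i j :: nat
      have "card {v \<in> V - X. f v = i} \<le> Suc 0"
        using f finV by (subst card_le_Suc0_iff_eq) (auto simp: bij_betw_def inj_on_def)
      thus "card {v \<in> V - X. f v = i} \<le> card {v \<in> V - X. f v = j} + 1" by linarith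
    qed
    thus ?thesis using X True unfolding equitably_colorable_def by auto
  next
    case False
    obtain X c where X: "X \<subseteq> V" "card X \<le> p" "equitable_coloring E (V - X) k c"
      using assms(3) unfolding almost_equitably_colorable_def equitably_colorable_def by blast
    have cVX: "card (V - X) = card V - card X" using X finV by (simp add: card_Diff_subset finite_subset)
    obtain S' where S': "S' \<subseteq> V - X" "card S' = card (V - X) - (p - card X)"
      "equitable_coloring E S' k c"
    proof -
      have "p - card X \<le> card (V - X)" using cVX False by linarith
      thus ?thesis using remove_many[OF _ X(3), of "p - card X"] finV that by blast
    qed
    define X' where "X' = V - S'"
    have "V - X' = S'" using S' unfolding X'_def by auto
    moreover have "card X' = p" unfolding X'_def using S' finV cVX False X(2)
      by (subst card_Diff_subset) (auto intro: finite_subset)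
    moreover have "X' \<subseteq> V" unfolding X'_def by auto
    ultimately show ?thesis using False S'(3) unfolding equitably_colorable_def
      by (intro exI[of _ X']) auto
  qed
qed

end
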